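(* Consider the Fuchsian system $\frac{d\Phi}{dz}=\left[\frac{A_1}{z}+\frac{A_2}{z-x}+\frac{A_3}{z-1}\right]\Phi$ with $A_1=\begin{pmatrix}-\frac{(\sqrt x+1)^2}{16\sqrt x}&-\frac1{2\sqrt x}\\ \frac{(\sqrt x+1)^4}{128\sqrt x}&\frac{(\sqrt x+1)^2}{16\sqrt x}\end{pmatrix}$, $A_2=\begin{pmatrix}-\frac{3\sqrt x-1}{16\sqrt x}&\frac1{2(\sqrt x+1)\sqrt x}\\ -\frac{(\sqrt x+1)(3\sqrt x-1)^2}{128\sqrt x}&\frac{3\sqrt x-1}{16\sqrt x}\end{pmatrix}$, $A_3=\begin{pmatrix}\frac1{16}(\sqrt x-3)&\frac1{2(\sqrt x+1)}\\ -\frac1{128}(\sqrt x-3)^2(\sqrt x+1)&\frac1{16}(3-\sqrt x)\end{pmatrix}$, which is an isomonodromic (Schlesinger) deformation in $x$ with $A_\infty=-(A_1+A_2+A_3)=\mathrm{diag}(\tfrac12,-\tfrac12)$ and $R^{(\infty)}=\begin{pmatrix}0&-\frac12\\0&0\end{pmatrix}$. Let $\Phi=(I+\Psi_1/z+O(1/z^2))z^{-A_\infty}z^{-R^{(\infty)}}$ be a fundamental matrix solution which also satisfies $\partial\Phi/\partial x=-\frac{A_2}{z-x}\Phi$. Then $(\Psi_1)_{12}=-\log(\sqrt x+1)$ (up to an additive constant), so $\Psi_1$ does not have entries in the field $\mathbb C(\sqrt x)$, whereas the differential field generated by $x$ and the entries of $A_1,A_2,A_3$ (and their derivatives) is isomorphic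 to $\mathbb C(\sqrt x)$.
   Context: Here the poles are $u_1=0$, $u_2=x$, $u_3=1$ with only $x$ varying; the Schlesinger equations reduce to $\partial_xA_1=\frac{[A_2,A_1]}{x}$, $\partial_xA_3=\frac{[A_2,A_3]}{x-1}$, $\partial_xA_2=-\frac{[A_2,A_1]}{x}-\frac{[A_2,A_3]}{x-1}$. $I$ is the $2\times2$ identity matrix and $\sqrt x$ denotes a fixed branch of the square root. *)

theory Defs
  imports "HOL-Analysis.Analysis" "HOL-Computational_Algebra.Polynomial"
begin

text \<open>2x2 complex matrices are rendered as complex^2^2 (HOL-Analysis).
  mat2 a b c d is the matrix with rows (a, b) and (c, d).\<close>

definition mat2 :: "complex \<Rightarrow> complex \<Rightarrow> complex \<Rightarrow> complex \<Rightarrow> complex^2^2" where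
  "mat2 a b c d = (\<chi> i j. if i = 1 then (if j = 1 then a else b) else (if j = 1 then c else d))"

definition cscale :: "complex \<Rightarrow> complex^2^2 \<Rightarrow> complex^2^2" where
  "cscale c M = (\<chi> i j. c * M $ i $ j)"

text \<open>The residue matrices, as functions of s = sqrt x (a fixed branch).\<close>

definition A1 :: "complex \<Rightarrow> complex^2^2" where
  "A1 s = mat2 (- ((s + 1)^2) / (16 * s))        (- 1 / (2 * s))
               ((s + 1)^4 / (128 * s))         ((s + 1)^2 / (16 * s))"

definition A2 :: "complex \<Rightarrow> complex^2^2" where
  "A2 s = mat2 (- (3 * s - 1) / (16 * s))                  (1 / (2 * (s + 1) * s))
               (- ((s + 1) * (3 * s - 1)^2) / (128 * s))      ((3 * s - 1) / (16 * s))"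

definition A3 :: "complex \<Rightarrow> complex^2^2" where
  "A3 s = mat2 ((s - 3) / 16)                    (1 / (2 * (s + 1)))
               (- ((s - 3)^2 * (s + 1)) / 128)     ((3 - s) / 16)"

text \<open>A_inf = -(A1+A2+A3) = diag(1/2,-1/2) and R_inf = ((0,-1/2),(0,0)).\<close>

definition Ainf :: "complex^2^2" where "Ainf = mat2 (1/2) 0 0 (-1/2)"
definition Rinf :: "complex^2^2" where "Rinf = mat2 0 (-1/2) 0 0"

definition fuchs_coeff :: "complex \<Rightarrow> complex \<Rightarrow> complex \<Rightarrow> complex^2^2" where
  "fuchs_coeff s x z = cscale (1 / z) (A1 s) + cscale (1 / (z - x)) (A2 s) + cscale (1 / (z - 1)) (A3 s)"

text \<open>z^(-A_inf) = exp(-A_inf log z) = diag(z^(-1/2), z^(1/2)) and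
  z^(-R_inf) = exp(-R_inf log z) = I - R_inf log z (R_inf is nilpotent),
  with the principal branch Ln of log z on the plane slit along (-inf,0].\<close>

definition zpow_negAinf :: "complex \<Rightarrow> complex^2^2" where
  "zpow_negAinf z = mat2 (exp (- (1/2) * Ln z)) 0 0 (exp ((1/2) * Ln z))"

definition zpow_negRinf :: "complex \<Rightarrow> complex^2^2" where
  "zpow_negRinf z = mat 1 - cscale (Ln z) Rinf"

text \<open>Domain of (z, x): x in U, z in a slit neighbourhood of infinity
  avoiding the poles 0, x, 1.\<close>

definition dom_zx :: "complex set \<Rightarrow> (complex \<times> complex) set" where
  "dom_zx U = {(z, x). x \<in> U \<and> max 1 (norm x) < norm z \<and> \<not> (Im z = 0 \<and> Re z \<le> 0)}"

end

theory Submission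
  imports Defs "HOL-Complex_Analysis.Complex_Analysis" "HOL-Real_Asymp.Real_Asymp"
begin

no_notation fps_nth (infixl "$" 75)

lemma mat2_nth [simp]: "mat2 a b c d $ 1 $ 1 = a" "mat2 a b c d $ 1 $ 2 = b"
  "mat2 a b c d $ 2 $ 1 = c" "mat2 a b c d $ 2 $ 2 = d"
  by (simp_all add: mat2_def)

lemma mat2_eta: "(M::complex^2^2) = mat2 (M$1$1) (M$1$2) (M$2$1) (M$2$2)"
  by (simp add: mat2_def vec_eq_iff forall_2)

lemma mat2_mult: "mat2 a b c d ** mat2 a' b' c' d' = mat2 (a*a'+b*c') (a*b'+b*d') (c*a'+d*c') (c*b'+d*d')"
  by (simp add: mat2_def matrix_matrix_mult_def vec_eq_iff forall_2 sum_2)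

lemma mat1_mat2: "(mat 1 :: complex^2^2) = mat2 1 0 0 1"
  by (simp add: mat2_def mat_def vec_eq_iff forall_2)

lemma mat2_diff: "mat2 a b c d - mat2 a' b' c' d' = mat2 (a-a') (b-b') (c-c') (d-d')"
  by (simp add: mat2_def vec_eq_iff forall_2)

lemma cscale_mat2: "cscale k (mat2 a b c d) = mat2 (k*a) (k*b) (k*c) (k*d)"
  by (simp add: mat2_def cscale_def vec_eq_iff forall_2)

lemma cscale_nth [simp]: "cscale k M $ i $ j = k * M $ i $ j"
  by (simp add: cscale_def)

lemma cscale_mult: "cscale k A ** B = cscale k (A ** B)"
  by (simp add: cscale_def matrix_matrix_mult_def vec_eq_iff sum_distrib_left mult.assoc)

definition Ninv :: "complex \<Rightarrow> complex^2^2" where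
  "Ninv z = mat2 (exp (Ln z / 2)) (- (Ln z / 2) * exp (- (Ln z / 2))) 0 (exp (- (Ln z / 2)))"

lemma N_Ninv: "zpow_negAinf z ** zpow_negRinf z ** Ninv z = mat 1"
proof -
  have e: "exp (- (1/2) * Ln z) * exp (Ln z / 2) = 1" "exp ((1/2) * Ln z) * exp (- (Ln z / 2)) = 1"
    by (simp_all flip: exp_add)
  show ?thesis
    unfolding zpow_negAinf_def zpow_negRinf_def Ninv_def Rinf_def mat1_mat2 cscale_mat2 mat2_diff mat2_mult
    using e by (simp add: algebra_simps)
qed

lemma entry_le_norm: "norm ((M::complex^2^2) $ i $ j) \<le> norm M"
proof -
  have "norm (M $ i $ j) \<le> norm (M $ i)" by (rule Finite_Cartesian_Product.norm_nth_le[where x="M $ i" and i=j])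
  moreover have "norm (M $ i) \<le> norm M" by (rule Finite_Cartesian_Product.norm_nth_le[where x=M and i=i])
  ultimately show ?thesis by linarith
qed

lemma norm_le_entries: "norm (M::complex^2^2) \<le> (\<Sum>i\<in>UNIV. \<Sum>j\<in>UNIV. norm (M $ i $ j))"
proof -
  have "norm M \<le> (\<Sum>i\<in>UNIV. norm (M $ i))"
    unfolding norm_vec_def by (rule L2_set_le_sum) simp
  also have "\<dots> \<le> (\<Sum>i\<in>UNIV. \<Sum>j\<in>UNIV. norm (M $ i $ j))"
  proof (rule sum_mono)
    fix i show "norm (M $ i) \<le> (\<Sum>j\<in>UNIV. norm (M $ i $ j))"
      unfolding norm_vec_def by (rule L2_set_le_sum) simp
  qed
  finally show ?thesis .
qed

lemma prod_entry_bound: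
  assumes "\<And>i j. norm ((A::complex^2^2) $ i $ j) \<le> a" "\<And>i j. norm ((B::complex^2^2) $ i $ j) \<le> b"
  shows "norm ((A ** B) $ i $ j) \<le> 2 * a * b"
proof -
  have "norm ((A ** B) $ i $ j) \<le> norm (A$i$1) * norm (B$1$j) + norm (A$i$2) * norm (B$2$j)"
    by (simp add: matrix_matrix_mult_def sum_2 norm_mult[symmetric] norm_triangle_ineq)
  also have "\<dots> \<le> a * b + a * b"
  proof -
    have "0 \<le> a" using assms(1)[of i 1] norm_ge_zero order_trans by blast
    then show ?thesis by (intro add_mono mult_mono assms) auto
  qed
  finally show ?thesis by simp
qed

lemma mat_cont:
  assumes "\<And>i j. continuous_on S (\<lambda>y. F y $ i $ j)"
  shows "continuous_on S (F :: 'a::topological_space \<Rightarrow> complex^2^2)"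
proof -
  have "continuous_on S (\<lambda>y. \<chi> i. \<chi> j. F y $ i $ j)"
    by (intro continuous_on_vec_lambda assms)
  then show ?thesis by simp
qed

lemma mat_bound:
  assumes "compact S" "continuous_on S (F :: 'a::topological_space \<Rightarrow> complex^2^2)"
  shows "\<exists>K\<ge>0. \<forall>y\<in>S. \<forall>i j. norm (F y $ i $ j) \<le> K"
proof -
  have "bounded (F ` S)" by (intro compact_imp_bounded compact_continuous_image assms)
  then obtain a where a: "\<forall>x\<in>F ` S. norm x \<le> a" by (auto simp: bounded_iff)
  show ?thesis
  proof (intro exI[of _ "max a 0"] conjI ballI allI)
    fix y i j assume "y \<in> S"
    then have "norm (F y) \<le> a" using a by blast
    then show "norm (F y $ i $ j) \<le> max a 0" using entry_le_norm[of "F y" i j] by linarith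
  qed simp
qed


locale S9 =
  fixes U :: "complex set"
    and s :: "complex \<Rightarrow> complex"
    and \<Phi> :: "complex \<Rightarrow> complex \<Rightarrow> complex^2^2"
    and \<Psi>1 :: "complex \<Rightarrow> complex^2^2"
  assumes U: "open U" "connected U" "U \<noteq> {}" "0 \<notin> U" "1 \<notin> U"
    and sqrt_branch: "s holomorphic_on U" "\<And>x. x \<in> U \<Longrightarrow> (s x)^2 = x"
    and pde_x: "\<And>z x i j. (z, x) \<in> dom_zx U \<Longrightarrow>
        ((\<lambda>y. \<Phi> z y $ i $ j) has_field_derivative
           ((cscale (- 1 / (z - x)) (A2 (s x)) ** \<Phi> z x) $ i $ j)) (at x)"
    and expansion: "\<And>x. x \<in> U \<Longrightarrow> \<exists>E :: complex \<Rightarrow> complex^2^2.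
        (\<forall>z. (z, x) \<in> dom_zx U \<longrightarrow>
            \<Phi> z x = (mat 1 + cscale (1 / z) (\<Psi>1 x) + E z) ** zpow_negAinf z ** zpow_negRinf z)
        \<and> (\<exists>C r. \<forall>z. (z, x) \<in> dom_zx U \<and> r \<le> norm z \<longrightarrow> norm (E z) \<le> C / (norm z)^2)"
begin

definition G :: "complex \<Rightarrow> complex \<Rightarrow> complex^2^2" where
  "G z x = \<Phi> z x ** Ninv z"

lemma dom_real: "x \<in> U \<Longrightarrow> max 1 (norm x) < t \<Longrightarrow> (complex_of_real t, x) \<in> dom_zx U"
  by (auto simp: dom_zx_def)

lemma s_nz: "x \<in> U \<Longrightarrow> s x \<noteq> 0"
  using sqrt_branch(2)[of x] U(4) by auto

lemma s_nm1: "x \<in> U \<Longrightarrow> s x + 1 \<noteq> 0"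
proof
  assume "x \<in> U" "s x + 1 = 0"
  then have "s x = -1" by (metis add_diff_cancel_right' diff_0)
  then have "x = 1" using sqrt_branch(2)[OF \<open>x \<in> U\<close>] by simp
  then show False using U(5) \<open>x \<in> U\<close> by simp
qed

lemma dG:
  assumes "(z, x) \<in> dom_zx U"
  shows "((\<lambda>y. G z y $ i $ j) has_field_derivative
           ((cscale (- 1 / (z - x)) (A2 (s x)) ** G z x) $ i $ j)) (at x)"
proof -
  have "((\<lambda>y. \<Sum>k\<in>UNIV. \<Phi> z y $ i $ k * Ninv z $ k $ j) has_field_derivative
     (\<Sum>k\<in>UNIV. (cscale (- 1 / (z - x)) (A2 (s x)) ** \<Phi> z x) $ i $ k * Ninv z $ k $ j)) (at x)"
    by (intro DERIV_sum DERIV_cmult_right pde_x assms)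
  moreover have "(cscale (- 1 / (z - x)) (A2 (s x)) ** G z x) $ i $ j =
     (\<Sum>k\<in>UNIV. (cscale (- 1 / (z - x)) (A2 (s x)) ** \<Phi> z x) $ i $ k * Ninv z $ k $ j)"
    unfolding G_def matrix_mul_assoc by (simp add: matrix_matrix_mult_def)
  ultimately show ?thesis unfolding G_def by (simp add: matrix_matrix_mult_def)
qed

lemma G_exp:
  assumes "x \<in> U"
  shows "\<exists>E :: complex \<Rightarrow> complex^2^2.
        (\<forall>z. (z, x) \<in> dom_zx U \<longrightarrow> G z x = mat 1 + cscale (1 / z) (\<Psi>1 x) + E z)
        \<and> (\<exists>C r. \<forall>z. (z, x) \<in> dom_zx U \<and> r \<le> norm z \<longrightarrow> norm (E z) \<le> C / (norm z)^2)"
proof -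
  obtain E where E: "\<forall>z. (z, x) \<in> dom_zx U \<longrightarrow>
            \<Phi> z x = (mat 1 + cscale (1 / z) (\<Psi>1 x) + E z) ** zpow_negAinf z ** zpow_negRinf z"
    and C: "\<exists>C r. \<forall>z. (z, x) \<in> dom_zx U \<and> r \<le> norm z \<longrightarrow> norm (E z) \<le> C / (norm z)^2"
    using expansion[OF assms] by blast
  have "\<forall>z. (z, x) \<in> dom_zx U \<longrightarrow> G z x = mat 1 + cscale (1 / z) (\<Psi>1 x) + E z"
  proof (intro allI impI)
    fix z assume "(z, x) \<in> dom_zx U"
    then have "G z x = (mat 1 + cscale (1 / z) (\<Psi>1 x) + E z) ** (zpow_negAinf z ** zpow_negRinf z ** Ninv z)"
      using E unfolding G_def by (simp add: matrix_mul_assoc)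
    then show "G z x = mat 1 + cscale (1 / z) (\<Psi>1 x) + E z"
      by (simp add: N_Ninv matrix_mul_rid)
  qed
  with C show ?thesis by blast
qed

lemma G_lim2:
  assumes "x \<in> U"
  shows "((\<lambda>t. complex_of_real t * (G (complex_of_real t) x $ i $ j - mat 1 $ i $ j)) \<longlongrightarrow> \<Psi>1 x $ i $ j) at_top"
proof -
  obtain E C r where E: "\<forall>z. (z, x) \<in> dom_zx U \<longrightarrow> G z x = mat 1 + cscale (1 / z) (\<Psi>1 x) + E z"
    and C: "\<forall>z. (z, x) \<in> dom_zx U \<and> r \<le> norm z \<longrightarrow> norm (E z) \<le> C / (norm z)^2"
    using G_exp[OF assms] by blast
  have ev: "eventually (\<lambda>t. t > max (max 1 (norm x)) r) at_top" by (rule eventually_gt_at_top)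
  have "((\<lambda>t. complex_of_real t * E (complex_of_real t) $ i $ j) \<longlongrightarrow> 0) at_top"
  proof (rule Lim_null_comparison)
    show "eventually (\<lambda>t. norm (complex_of_real t * E (complex_of_real t) $ i $ j) \<le> C / t) at_top"
      using ev
    proof eventually_elim
      case (elim t)
      then have t: "t > 0" "max 1 (norm x) < t" "r \<le> norm (complex_of_real t)" by auto
      have "norm (E (complex_of_real t)) \<le> C / t^2"
        using C dom_real[OF assms t(2)] t by auto
      then have "norm (E (complex_of_real t) $ i $ j) \<le> C / t^2"
        using entry_le_norm order_trans by blast
      then have "t * norm (E (complex_of_real t) $ i $ j) \<le> t * (C / t^2)"
        using t by (intro mult_left_mono) auto
      also have "t * (C / t^2) = C / t" using t by (simp add: power2_eq_square)
      finally show ?case using t by (simp add: norm_mult)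
    qed
    show "((\<lambda>t. C / t) \<longlongrightarrow> 0) at_top" by real_asymp
  qed
  then have "((\<lambda>t. \<Psi>1 x $ i $ j + complex_of_real t * E (complex_of_real t) $ i $ j) \<longlongrightarrow> \<Psi>1 x $ i $ j + 0) at_top"
    by (intro tendsto_add tendsto_const)
  then have L: "((\<lambda>t. \<Psi>1 x $ i $ j + complex_of_real t * E (complex_of_real t) $ i $ j) \<longlongrightarrow> \<Psi>1 x $ i $ j) at_top"
    by simp
  show ?thesis
  proof (rule Lim_transform_eventually[OF L])
    show "eventually (\<lambda>t. \<Psi>1 x $ i $ j + complex_of_real t * E (complex_of_real t) $ i $ j =
       complex_of_real t * (G (complex_of_real t) x $ i $ j - mat 1 $ i $ j)) at_top"
      using ev
    proof eventually_elim
      case (elim t)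
      then have "G (complex_of_real t) x = mat 1 + cscale (1 / complex_of_real t) (\<Psi>1 x) + E (complex_of_real t)"
        using E dom_real[OF assms] by auto
      then show ?case using elim by (simp add: algebra_simps)
    qed
  qed
qed

lemma G_lim:
  assumes "x \<in> U"
  shows "((\<lambda>t. G (complex_of_real t) x $ i $ j) \<longlongrightarrow> mat 1 $ i $ j) at_top"
proof -
  have "((\<lambda>t. (1 / complex_of_real t) * (complex_of_real t * (G (complex_of_real t) x $ i $ j - mat 1 $ i $ j)) + mat 1 $ i $ j)
      \<longlongrightarrow> 0 * \<Psi>1 x $ i $ j + mat 1 $ i $ j) at_top"
  proof (intro tendsto_add tendsto_mult G_lim2 assms tendsto_const)
    have "((\<lambda>t. complex_of_real (1 / t)) \<longlongrightarrow> complex_of_real 0) at_top"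
      by (intro tendsto_of_real) real_asymp
    then show "((\<lambda>t. 1 / complex_of_real t) \<longlongrightarrow> 0) at_top" by simp
  qed
  then have L: "((\<lambda>t. (1 / complex_of_real t) * (complex_of_real t * (G (complex_of_real t) x $ i $ j - mat 1 $ i $ j)) + mat 1 $ i $ j)
      \<longlongrightarrow> mat 1 $ i $ j) at_top" by simp
  show ?thesis
  proof (rule Lim_transform_eventually[OF L])
    show "eventually (\<lambda>t. 1 / complex_of_real t * (complex_of_real t * (G (complex_of_real t) x $ i $ j - mat 1 $ i $ j)) +
         mat 1 $ i $ j = G (complex_of_real t) x $ i $ j) at_top"
      using eventually_gt_at_top[of 0] by eventually_elim simp
  qed
qed


lemma A2_cont: "continuous_on U (\<lambda>y. A2 (s y))"
proof (rule mat_cont)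
  fix i j :: 2
  have cs: "continuous_on U s" by (rule holomorphic_on_imp_continuous_on[OF sqrt_branch(1)])
  have nz: "\<forall>y\<in>U. s y \<noteq> 0" "\<forall>y\<in>U. s y + 1 \<noteq> 0" "\<forall>y\<in>U. 2 * s y + 2 \<noteq> 0"
  proof -
    show "\<forall>y\<in>U. s y \<noteq> 0" using s_nz by blast
    show "\<forall>y\<in>U. s y + 1 \<noteq> 0" using s_nm1 by blast
    show "\<forall>y\<in>U. 2 * s y + 2 \<noteq> 0"
    proof
      fix y assume "y \<in> U"
      have "2 * s y + 2 = 2 * (s y + 1)" by simp
      also have "\<dots> \<noteq> 0" using s_nm1[OF \<open>y \<in> U\<close>] by (metis mult_eq_0_iff zero_neq_numeral)
      finally show "2 * s y + 2 \<noteq> 0" .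
    qed
  qed
  show "continuous_on U (\<lambda>y. A2 (s y) $ i $ j)"
    using exhaust_2[of i] exhaust_2[of j]
    by (elim disjE) (use nz in \<open>auto simp: A2_def intro!: continuous_intros cs\<close>)
qed

lemma step1_fixed:
  assumes cb: "cball x0 \<delta> \<subseteq> U" and dpos: "\<delta> > 0"
    and K: "\<forall>y\<in>cball x0 \<delta>. \<forall>i j. norm (A2 (s y) $ i $ j) \<le> K" "K \<ge> 0"
    and R0: "\<forall>y\<in>cball x0 \<delta>. norm y \<le> R0" "R0 \<ge> 1"
    and t: "t \<ge> 2*R0 + 1" "t \<ge> 32*K*\<delta>"
    and y: "y \<in> cball x0 \<delta>"
  shows "norm (G (complex_of_real t) y $ i $ j - G (complex_of_real t) x0 $ i $ j)
          \<le> 8*K*\<delta>*(\<Sum>i\<in>UNIV. \<Sum>j\<in>UNIV. norm (G (complex_of_real t) x0 $ i $ j)) / t"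
proof -
  define z where "z = complex_of_real t"
  define m0 where "m0 = (\<Sum>i\<in>UNIV. \<Sum>j\<in>UNIV. norm (G z x0 $ i $ j))"
  have tpos: "t > 0" using t R0 by linarith
  have dom: "(z, y) \<in> dom_zx U" if "y \<in> cball x0 \<delta>" for y
  proof -
    have "max 1 (norm y) < t" using R0 t that by force
    then show ?thesis unfolding z_def using that cb by (intro dom_real) auto
  qed
  have dst: "norm (z - y) \<ge> t/2" if "y \<in> cball x0 \<delta>" for y
  proof -
    have "norm z - norm y \<le> norm (z - y)" by (rule norm_triangle_ineq2)
    moreover have "norm z = t" using tpos unfolding z_def by simp
    moreover have "norm y \<le> R0" using R0 that by blast
    ultimately show ?thesis using t by linarith
  qed
  have der: "((\<lambda>y. G z y $ i $ j) has_field_derivative (cscale (-1/(z-y)) (A2 (s y)) ** G z y) $ i $ j) (at y)"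
    if "y \<in> cball x0 \<delta>" for y i j
    using dG[OF dom[OF that]] .
  have cont: "continuous_on (cball x0 \<delta>) (G z)"
  proof (rule mat_cont)
    fix i j
    show "continuous_on (cball x0 \<delta>) (\<lambda>y. G z y $ i $ j)"
      by (rule continuous_at_imp_continuous_on) (use der DERIV_continuous in blast)
  qed
  obtain ym where ym: "ym \<in> cball x0 \<delta>" "\<forall>y\<in>cball x0 \<delta>. norm (G z y) \<le> norm (G z ym)"
  proof -
    have "continuous_on (cball x0 \<delta>) (\<lambda>y. norm (G z y))" using cont by (rule continuous_on_norm)
    then show ?thesis using continuous_attains_sup[of "cball x0 \<delta>" "\<lambda>y. norm (G z y)"] dpos that by auto
  qed
  define M where "M = norm (G z ym)"
  have M0: "M \<ge> 0" unfolding M_def by simp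
  have entM: "norm (G z y $ i $ j) \<le> M" if "y \<in> cball x0 \<delta>" for y i j
    using ym(2) that entry_le_norm[of "G z y" i j] unfolding M_def by fastforce
  have derbound: "norm ((cscale (-1/(z-y)) (A2 (s y)) ** G z y) $ i $ j) \<le> 4*K*M/t"
    if "y \<in> cball x0 \<delta>" for y i j
  proof -
    have "norm ((cscale (-1/(z-y)) (A2 (s y)) ** G z y) $ i $ j)
        = norm (-1/(z-y)) * norm ((A2 (s y) ** G z y) $ i $ j)"
      by (simp add: cscale_mult norm_mult norm_divide)
    also have "\<dots> \<le> (2/t) * (2*K*M)"
    proof (rule mult_mono)
      have "norm (z - y) > 0" using dst[OF that] tpos by linarith
      then show "norm (-1/(z-y)) \<le> 2/t" using dst[OF that] tpos
        by (simp add: norm_divide divide_simps)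
      show "norm ((A2 (s y) ** G z y) $ i $ j) \<le> 2*K*M"
        by (rule prod_entry_bound) (use K that entM in auto)
    qed (use tpos in auto)
    finally show ?thesis by simp
  qed
  have diff: "norm (G z y $ i $ j - G z x0 $ i $ j) \<le> 4*K*M*\<delta>/t"
    if "y \<in> cball x0 \<delta>" for y i j
  proof -
    have "norm (G z y $ i $ j - G z x0 $ i $ j) \<le> 4*K*M/t * norm (y - x0)"
      by (rule field_differentiable_bound[OF convex_cball, where f'="\<lambda>y. (cscale (-1/(z-y)) (A2 (s y)) ** G z y) $ i $ j"])
         (use der derbound that dpos in \<open>auto intro: has_field_derivative_at_within\<close>)
    also have "\<dots> \<le> 4*K*M/t * \<delta>"
      using that K M0 tpos by (intro mult_left_mono) (auto simp: dist_norm norm_minus_commute)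
    finally show ?thesis by simp
  qed
  have "M \<le> (\<Sum>i\<in>UNIV. \<Sum>j\<in>UNIV. norm (G z ym $ i $ j))"
    unfolding M_def by (rule norm_le_entries)
  also have "\<dots> \<le> (\<Sum>i\<in>UNIV. \<Sum>j\<in>UNIV. norm (G z x0 $ i $ j) + 4*K*M*\<delta>/t)"
  proof (intro sum_mono)
    fix i j
    have "norm (G z ym $ i $ j) \<le> norm (G z x0 $ i $ j) + norm (G z ym $ i $ j - G z x0 $ i $ j)"
      by (rule norm_triangle_sub)
    then show "norm (G z ym $ i $ j) \<le> norm (G z x0 $ i $ j) + 4*K*M*\<delta>/t"
      using diff[OF ym(1), of i j] by linarith
  qed
  also have "\<dots> = m0 + 16*K*M*\<delta>/t"
    unfolding m0_def by (simp add: sum_2)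
  also have "16*K*M*\<delta>/t \<le> M/2"
  proof -
    have "32*K*\<delta>*M \<le> t*M" using t M0 by (intro mult_right_mono) auto
    then show ?thesis using tpos by (simp add: divide_simps) (simp add: algebra_simps)
  qed
  finally have "M \<le> 2*m0" by simp
  have "norm (G z y $ i $ j - G z x0 $ i $ j) \<le> 4*K*M*\<delta>/t" by (rule diff[OF y])
  also have "\<dots> \<le> 4*K*(2*m0)*\<delta>/t"
    using \<open>M \<le> 2*m0\<close> K dpos tpos
    by (intro divide_right_mono mult_right_mono mult_left_mono) auto
  finally show ?thesis unfolding z_def m0_def by (simp add: algebra_simps)
qed


lemma cball_setup:
  assumes "x0 \<in> U" "\<delta> > 0" "cball x0 \<delta> \<subseteq> U"
  obtains K R0 where "K \<ge> 0" "\<forall>y\<in>cball x0 \<delta>. \<forall>i j. norm (A2 (s y) $ i $ j) \<le> K"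
    "\<forall>y\<in>cball x0 \<delta>. norm y \<le> R0" "R0 \<ge> 1"
proof -
  obtain K where K: "K \<ge> 0" "\<forall>y\<in>cball x0 \<delta>. \<forall>i j. norm (A2 (s y) $ i $ j) \<le> K"
    using mat_bound[OF compact_cball continuous_on_subset[OF A2_cont assms(3)]] by blast
  have R0: "\<forall>y\<in>cball x0 \<delta>. norm y \<le> norm x0 + \<delta> + 1" "norm x0 + \<delta> + 1 \<ge> 1"
  proof -
    show "\<forall>y\<in>cball x0 \<delta>. norm y \<le> norm x0 + \<delta> + 1"
    proof
      fix y assume "y \<in> cball x0 \<delta>"
      then have "norm (y - x0) \<le> \<delta>" by (simp add: dist_norm norm_minus_commute)
      moreover have "norm y \<le> norm x0 + norm (y - x0)" by (rule norm_triangle_sub)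
      ultimately show "norm y \<le> norm x0 + \<delta> + 1" by linarith
    qed
    show "norm x0 + \<delta> + 1 \<ge> 1" using assms by simp
  qed
  show ?thesis using that K R0 by blast
qed

lemma G_unif:
  assumes x0: "x0 \<in> U" and dpos: "\<delta> > 0" and cb: "cball x0 \<delta> \<subseteq> U" and e: "e > 0"
  shows "eventually (\<lambda>t. \<forall>y\<in>cball x0 \<delta>. \<forall>i j. norm (G (complex_of_real t) y $ i $ j - mat 1 $ i $ j) \<le> e) at_top"
proof -
  obtain K R0 where K: "K \<ge> 0" "\<forall>y\<in>cball x0 \<delta>. \<forall>i j. norm (A2 (s y) $ i $ j) \<le> K"
    and R0: "\<forall>y\<in>cball x0 \<delta>. norm y \<le> R0" "R0 \<ge> 1"
    using cball_setup[OF assms(1-3)] by blast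
  define m0 where "m0 t = (\<Sum>i\<in>UNIV. \<Sum>j\<in>UNIV. norm (G (complex_of_real t) x0 $ i $ j))" for t
  define L where "L = (\<Sum>i\<in>UNIV. \<Sum>j\<in>UNIV. norm ((mat 1 :: complex^2^2) $ i $ j))"
  have m0lim: "(m0 \<longlongrightarrow> L) at_top"
    unfolding m0_def L_def sum_2 by (intro tendsto_add tendsto_norm G_lim[OF x0])
  have inv: "((\<lambda>t::real. 1/t) \<longlongrightarrow> 0) at_top" by real_asymp
  have "((\<lambda>t. (8*K*\<delta>*m0 t) * (1/t)) \<longlongrightarrow> (8*K*\<delta>*L) * 0) at_top"
    by (intro tendsto_mult tendsto_const m0lim inv)
  then have "eventually (\<lambda>t. (8*K*\<delta>*m0 t) * (1/t) < e/2) at_top"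
    using e by (intro order_tendstoD(2)) auto
  moreover have "eventually (\<lambda>t. \<forall>i j. norm (G (complex_of_real t) x0 $ i $ j - mat 1 $ i $ j) < e/2) at_top"
  proof (intro eventually_all_finite)
    fix i j :: 2
    have "((\<lambda>t. G (complex_of_real t) x0 $ i $ j) \<longlongrightarrow> mat 1 $ i $ j) at_top" by (rule G_lim[OF x0])
    then show "eventually (\<lambda>t. norm (G (complex_of_real t) x0 $ i $ j - mat 1 $ i $ j) < e/2) at_top"
      using e unfolding tendsto_iff dist_norm by (metis half_gt_zero)
  qed
  moreover have "eventually (\<lambda>t. t \<ge> 2*R0 + 1) at_top" by (rule eventually_ge_at_top)
  moreover have "eventually (\<lambda>t. t \<ge> 32*K*\<delta>) at_top" by (rule eventually_ge_at_top)
  ultimately show ?thesis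
  proof eventually_elim
    case (elim t)
    show ?case
    proof (intro ballI allI)
      fix y i j assume y: "y \<in> cball x0 \<delta>"
      have "norm (G (complex_of_real t) y $ i $ j - mat 1 $ i $ j) \<le>
          norm (G (complex_of_real t) y $ i $ j - G (complex_of_real t) x0 $ i $ j)
          + norm (G (complex_of_real t) x0 $ i $ j - mat 1 $ i $ j)"
        using norm_triangle_ineq[of "G (complex_of_real t) y $ i $ j - G (complex_of_real t) x0 $ i $ j"
            "G (complex_of_real t) x0 $ i $ j - mat 1 $ i $ j"] by simp
      also have "\<dots> \<le> 8*K*\<delta>*m0 t / t + e/2"
        using step1_fixed[OF cb dpos K(2,1) R0 elim(3,4) y, of i j] elim(2)
        unfolding m0_def by (intro add_mono) (auto intro: less_imp_le)
      also have "\<dots> \<le> e" using elim(1) by simp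
      finally show "norm (G (complex_of_real t) y $ i $ j - mat 1 $ i $ j) \<le> e" .
    qed
  qed
qed

end


lemma e2_alg: "(z::complex) - y \<noteq> 0 \<Longrightarrow> z * ((-1/(z-y)) * (a + b)) + b = -(z/(z-y))*a - (y/(z-y))*b"
  by (simp add: divide_simps) (simp add: algebra_simps)

context S9
begin

lemma key_bound:
  assumes y: "y \<in> cball x0 \<delta>"
    and K: "\<forall>y\<in>cball x0 \<delta>. \<forall>i j. norm (A2 (s y) $ i $ j) \<le> K" "K \<ge> 0"
    and R0: "\<forall>y\<in>cball x0 \<delta>. norm y \<le> R0" "R0 \<ge> 1"
    and t: "t \<ge> 2*R0 + 1"
    and eta: "\<forall>i j. norm (G (complex_of_real t) y $ i $ j - mat 1 $ i $ j) \<le> \<eta>" "\<eta> \<ge> 0"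
  shows "norm (complex_of_real t * (cscale (-1/(complex_of_real t - y)) (A2 (s y)) ** G (complex_of_real t) y) $ 1 $ 2
           + A2 (s y) $ 1 $ 2) \<le> 4*K*\<eta> + 2*R0*K/t"
proof -
  define z where "z = complex_of_real t"
  define A where "A = A2 (s y)"
  define W where "W = G z y - mat 1"
  have tpos: "t > 0" using t R0 by linarith
  have GW: "G z y = W + mat 1" unfolding W_def by simp
  have e1: "(cscale (-1/(z-y)) A ** G z y) $ 1 $ 2 = (-1/(z-y)) * ((A ** W) $ 1 $ 2 + A $ 1 $ 2)"
    by (simp add: cscale_mult GW matrix_add_ldistrib matrix_mul_rid add_divide_distrib)
  have ny: "norm y \<le> R0" using R0 y by blast
  have dst: "norm (z - y) \<ge> t/2"
  proof -
    have "norm z - norm y \<le> norm (z - y)" by (rule norm_triangle_ineq2)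
    moreover have "norm z = t" using tpos unfolding z_def by simp
    ultimately show ?thesis using t ny by linarith
  qed
  then have zy: "z - y \<noteq> 0" using tpos by auto
  have e2: "z * ((-1/(z-y)) * ((A ** W) $ 1 $ 2 + A $ 1 $ 2)) + A $ 1 $ 2
      = - (z/(z-y)) * (A ** W) $ 1 $ 2 - (y/(z-y)) * A $ 1 $ 2"
    using zy by (rule e2_alg)
  have n1: "norm (z/(z-y)) \<le> 2"
  proof -
    have "norm z = t" using tpos unfolding z_def by simp
    then show ?thesis using dst tpos by (simp add: norm_divide divide_simps)
  qed
  have n2: "norm (y/(z-y)) \<le> 2*R0/t"
  proof -
    have "norm y / norm (z - y) \<le> R0 / (t/2)"
      using ny dst tpos R0 by (intro frac_le) auto
    then show ?thesis by (simp add: norm_divide mult.commute)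
  qed
  have n3: "norm ((A ** W) $ 1 $ 2) \<le> 2*K*\<eta>"
    by (rule prod_entry_bound) (use K y eta in \<open>auto simp: A_def W_def z_def\<close>)
  have n4: "norm (A $ 1 $ 2) \<le> K" using K y unfolding A_def by blast
  have "norm (- (z/(z-y)) * (A ** W) $ 1 $ 2 - (y/(z-y)) * A $ 1 $ 2)
      \<le> norm (z/(z-y)) * norm ((A ** W) $ 1 $ 2) + norm (y/(z-y)) * norm (A $ 1 $ 2)"
  proof -
    have "norm (- (z/(z-y)) * (A ** W) $ 1 $ 2 - (y/(z-y)) * A $ 1 $ 2)
       \<le> norm (- (z/(z-y)) * (A ** W) $ 1 $ 2) + norm ((y/(z-y)) * A $ 1 $ 2)"
      by (rule norm_triangle_ineq4)
    also have "\<dots> = norm (z/(z-y)) * norm ((A ** W) $ 1 $ 2) + norm (y/(z-y)) * norm (A $ 1 $ 2)"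
      by (simp only: norm_mult norm_minus_cancel)
    finally show ?thesis .
  qed
  also have "\<dots> \<le> 2 * (2*K*\<eta>) + (2*R0/t) * K"
    by (intro add_mono mult_mono n1 n2 n3 n4) (use tpos R0 in auto)
  finally show ?thesis using e1 e2 unfolding z_def[symmetric] A_def[symmetric] by simp
qed

lemma Psi_deriv:
  assumes x0: "x0 \<in> U"
  shows "((\<lambda>x. \<Psi>1 x $ 1 $ 2) has_field_derivative -(A2 (s x0) $ 1 $ 2)) (at x0)"
proof -
  obtain \<delta> where dpos: "\<delta> > 0" and cb: "cball x0 \<delta> \<subseteq> U"
    using open_contains_cball U(1) x0 by blast
  obtain K R0 where K: "K \<ge> 0" "\<forall>y\<in>cball x0 \<delta>. \<forall>i j. norm (A2 (s y) $ i $ j) \<le> K"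
    and R0: "\<forall>y\<in>cball x0 \<delta>. norm y \<le> R0" "R0 \<ge> 1"
    using cball_setup[OF x0 dpos cb] by blast
  define S where "S = ball x0 \<delta>"
  define T where "T = 2*R0 + 1"
  define tn where "tn n = T + real n" for n :: nat
  define zn where "zn n = complex_of_real (tn n)" for n
  have tn_ge: "tn n \<ge> 2*R0+1" for n by (simp add: tn_def T_def)
  have tn_lim: "filterlim tn at_top sequentially"
    unfolding tn_def by (intro filterlim_tendsto_add_at_top[OF tendsto_const] filterlim_real_sequentially)
  have SC: "S \<subseteq> cball x0 \<delta>" unfolding S_def by auto
  have dom: "(zn n, y) \<in> dom_zx U" if "y \<in> cball x0 \<delta>" for n y
  proof -
    have "max 1 (norm y) < tn n" using R0 that tn_ge[of n] by force
    then show ?thesis unfolding zn_def using that cb by (intro dom_real) auto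
  qed
  define f where "f n y = zn n * (G (zn n) y $ 1 $ 2 - G (zn n) x0 $ 1 $ 2)" for n y
  define D where "D n y = zn n * (cscale (-1/(zn n - y)) (A2 (s y)) ** G (zn n) y) $ 1 $ 2" for n y
  have derf: "(f n has_derivative (\<lambda>h. D n y * h)) (at y within S)" if "y \<in> S" for n y
  proof -
    have "((\<lambda>y. G (zn n) y $ 1 $ 2) has_field_derivative
        (cscale (-1/(zn n - y)) (A2 (s y)) ** G (zn n) y) $ 1 $ 2) (at y)"
      using dG dom SC that by blast
    then have "((\<lambda>y. G (zn n) y $ 1 $ 2 - G (zn n) x0 $ 1 $ 2) has_field_derivative
        (cscale (-1/(zn n - y)) (A2 (s y)) ** G (zn n) y) $ 1 $ 2 - 0) (at y)"
      by (rule DERIV_diff[OF _ DERIV_const])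
    note d = this
    have "(f n has_field_derivative D n y) (at y)"
      unfolding f_def D_def using DERIV_cmult[OF d, of "zn n"] by (simp only: diff_zero)
    then show ?thesis
      unfolding has_field_derivative_def by (rule has_derivative_at_withinI)
  qed
  have nle: "eventually (\<lambda>n. \<forall>y\<in>S. \<forall>h. norm (D n y * h - (-(A2 (s y) $ 1 $ 2)) * h) \<le> e * norm h) sequentially"
    if e: "e > 0" for e
  proof -
    define e' where "e' = e / (8*(K+1))"
    have e'pos: "e' > 0" using e K unfolding e'_def by auto
    have "eventually (\<lambda>t. \<forall>y\<in>cball x0 \<delta>. \<forall>i j. norm (G (complex_of_real t) y $ i $ j - mat 1 $ i $ j) \<le> e') at_top"
      by (rule G_unif[OF x0 dpos cb e'pos])
    moreover have "eventually (\<lambda>t. t \<ge> 4*R0*(K+1)/e) at_top" by (rule eventually_ge_at_top)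
    moreover have "eventually (\<lambda>t. t \<ge> 2*R0+1) at_top" by (rule eventually_ge_at_top)
    ultimately have "eventually (\<lambda>t. (\<forall>y\<in>cball x0 \<delta>. \<forall>i j. norm (G (complex_of_real t) y $ i $ j - mat 1 $ i $ j) \<le> e')
        \<and> t \<ge> 4*R0*(K+1)/e \<and> t \<ge> 2*R0+1) at_top"
      by eventually_elim blast
    then have ev: "eventually (\<lambda>n. (\<forall>y\<in>cball x0 \<delta>. \<forall>i j. norm (G (zn n) y $ i $ j - mat 1 $ i $ j) \<le> e')
        \<and> tn n \<ge> 4*R0*(K+1)/e \<and> tn n \<ge> 2*R0+1) sequentially"
      using tn_lim unfolding filterlim_iff zn_def by blast
    show ?thesis using ev
    proof eventually_elim
      case (elim n)
      show ?case
      proof (intro ballI allI)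
        fix y h assume "y \<in> S"
        then have y: "y \<in> cball x0 \<delta>" using SC by blast
        have tpos: "tn n > 0" using elim R0 by linarith
        have kb: "norm (D n y + A2 (s y) $ 1 $ 2) \<le> 4*K*e' + 2*R0*K/tn n"
          unfolding D_def zn_def
          by (rule key_bound[OF y K(2,1) R0 elim[THEN conjunct2, THEN conjunct2]])
             (use elim y e'pos in \<open>auto simp: zn_def\<close>)
        have a: "4*K*e' \<le> e/2"
          using K e unfolding e'_def by (simp add: field_simps)
        have "2*R0*K \<le> (e/2) * tn n"
        proof -
          have "4*R0*(K+1) \<le> e * tn n" using elim e by (simp add: field_simps)
          then show ?thesis using R0 K by (simp add: algebra_simps)
        qed
        then have b: "2*R0*K/tn n \<le> e/2" using tpos by (simp add: divide_simps)
        have "norm (D n y * h - (-(A2 (s y) $ 1 $ 2)) * h) = norm (D n y + A2 (s y) $ 1 $ 2) * norm h"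
          by (simp add: norm_mult[symmetric] algebra_simps)
        also have "\<dots> \<le> e * norm h"
          using kb a b by (intro mult_right_mono) auto
        finally show "norm (D n y * h - (-(A2 (s y) $ 1 $ 2)) * h) \<le> e * norm h" .
      qed
    qed
  qed
  have lim0: "((\<lambda>n. f n x0) \<longlongrightarrow> 0) sequentially" by (simp add: f_def)
  obtain g where g: "\<forall>y\<in>S. (\<lambda>n. f n y) \<longlonglongrightarrow> g y \<and> (g has_derivative (\<lambda>h. (-(A2 (s y) $ 1 $ 2)) * h)) (at y within S)"
    using has_derivative_sequence[OF convex_ball[of x0 \<delta>, folded S_def], where f=f and f'="\<lambda>n y h. D n y * h"
        and g'="\<lambda>y h. (-(A2 (s y) $ 1 $ 2)) * h", OF derf nle _ lim0] dpos
    unfolding S_def by auto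
  have gval: "g y = \<Psi>1 y $ 1 $ 2 - \<Psi>1 x0 $ 1 $ 2" if "y \<in> S" for y
  proof -
    have yU: "y \<in> U" using that SC cb by blast
    have l1: "((\<lambda>n. zn n * (G (zn n) y $ 1 $ 2 - (mat 1 :: complex^2^2) $ 1 $ 2)) \<longlongrightarrow> \<Psi>1 y $ 1 $ 2) sequentially"
      unfolding zn_def using filterlim_compose[OF G_lim2[OF yU] tn_lim] by simp
    have l2: "((\<lambda>n. zn n * (G (zn n) x0 $ 1 $ 2 - (mat 1 :: complex^2^2) $ 1 $ 2)) \<longlongrightarrow> \<Psi>1 x0 $ 1 $ 2) sequentially"
      unfolding zn_def using filterlim_compose[OF G_lim2[OF x0] tn_lim] by simp
    have "(\<lambda>n. f n y) \<longlonglongrightarrow> \<Psi>1 y $ 1 $ 2 - \<Psi>1 x0 $ 1 $ 2"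
      using tendsto_diff[OF l1 l2] by (simp add: f_def algebra_simps)
    moreover have "(\<lambda>n. f n y) \<longlonglongrightarrow> g y" using g that by blast
    ultimately show ?thesis using LIMSEQ_unique by blast
  qed
  have x0S: "x0 \<in> S" unfolding S_def using dpos by simp
  have "(g has_derivative (\<lambda>h. (-(A2 (s x0) $ 1 $ 2)) * h)) (at x0)"
  proof -
    have "(g has_derivative (\<lambda>h. (-(A2 (s x0) $ 1 $ 2)) * h)) (at x0 within S)" using g x0S by blast
    moreover have "at x0 within S = at x0" using at_within_open[of x0 S] x0S unfolding S_def by simp
    ultimately show ?thesis by simp
  qed
  then have "((\<lambda>y. g y + \<Psi>1 x0 $ 1 $ 2) has_derivative (\<lambda>h. (-(A2 (s x0) $ 1 $ 2)) * h)) (at x0)"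
    by (rule has_derivative_add_const)
  then have "((\<lambda>y. \<Psi>1 y $ 1 $ 2) has_derivative (\<lambda>h. (-(A2 (s x0) $ 1 $ 2)) * h)) (at x0)"
    by (rule has_derivative_transform_within_open[where s=S]) (use x0S gval in \<open>auto simp: S_def\<close>)
  note dd = this
  show ?thesis unfolding has_field_derivative_def
    by (rule has_derivative_eq_rhs[OF dd]) (simp add: fun_eq_iff)
qed

end


lemma alg0: "(a::complex) \<noteq> 0 \<Longrightarrow> a + 1 \<noteq> 0 \<Longrightarrow> (1/(2*a) + 0) * E + E * (-(1/(2*(a+1)*a))) * (a+1) = 0"
proof -
  assume h: "a \<noteq> 0" "a + 1 \<noteq> 0"
  have "E * (-(1/(2*(a+1)*a))) * (a+1) = - (E * ((a+1)/(2*(a+1)*a)))" by simp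
  also have "(a+1)/(2*(a+1)*a) = 1/(2*a)"
  proof -
    have "2*(a+1)*a = (a+1)*(2*a)" by (simp only: mult_ac)
    then show ?thesis by (metis nonzero_divide_mult_cancel_left h(2))
  qed
  finally show ?thesis by simp
qed

context S9
begin

lemma s_deriv:
  assumes x: "x \<in> U"
  shows "(s has_field_derivative 1 / (2 * s x)) (at x)"
proof -
  have "s field_differentiable at x"
    using holomorphic_on_imp_differentiable_at[OF sqrt_branch(1) U(1) x] .
  then obtain s' where s': "(s has_field_derivative s') (at x)"
    unfolding field_differentiable_def by blast
  have "((\<lambda>y. s y * s y) has_field_derivative s' * s x + s' * s x) (at x)"
    by (rule DERIV_mult[OF s' s'])
  then have "((\<lambda>y. y) has_field_derivative s' * s x + s' * s x) (at x)"
    by (rule has_field_derivative_transform_within_open[OF _ U(1) x])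
       (use sqrt_branch(2) in \<open>simp add: power2_eq_square\<close>)
  moreover have "((\<lambda>y. y) has_field_derivative 1) (at x)" by (rule DERIV_ident)
  ultimately have "s' * s x + s' * s x = 1" by (rule DERIV_unique)
  then have "s' = 1 / (2 * s x)" using s_nz[OF x] by (simp add: field_simps)
  then show ?thesis using s' by simp
qed

lemma part1: "\<exists>c. \<forall>x\<in>U. exp (c - \<Psi>1 x $ 1 $ 2) = s x + 1"
proof -
  define F where "F x = (s x + 1) * exp (\<Psi>1 x $ 1 $ 2)" for x
  have dF: "(F has_field_derivative 0) (at x)" if x: "x \<in> U" for x
  proof -
    have d1: "((\<lambda>y. s y + 1) has_field_derivative 1 / (2 * s x) + 0) (at x)"
      by (rule DERIV_add[OF s_deriv[OF x] DERIV_const])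
    have d2: "((\<lambda>y. exp (\<Psi>1 y $ 1 $ 2)) has_field_derivative exp (\<Psi>1 x $ 1 $ 2) * (-(A2 (s x) $ 1 $ 2))) (at x)"
      by (rule DERIV_fun_exp[OF Psi_deriv[OF x]])
    have "(F has_field_derivative (1 / (2 * s x) + 0) * exp (\<Psi>1 x $ 1 $ 2)
            + exp (\<Psi>1 x $ 1 $ 2) * (-(A2 (s x) $ 1 $ 2)) * (s x + 1)) (at x)"
      unfolding F_def by (rule DERIV_mult[OF d1 d2])
    moreover have "(1 / (2 * s x) + 0) * exp (\<Psi>1 x $ 1 $ 2)
            + exp (\<Psi>1 x $ 1 $ 2) * (-(A2 (s x) $ 1 $ 2)) * (s x + 1) = 0"
      using alg0[OF s_nz[OF x] s_nm1[OF x]] by (simp add: A2_def)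
    ultimately show ?thesis by simp
  qed
  have "continuous_on U F"
    by (rule continuous_at_imp_continuous_on) (use dF DERIV_continuous in blast)
  then obtain k where k: "\<And>x. x \<in> U \<Longrightarrow> F x = k"
    using DERIV_zero_connected_constant[OF U(2) U(1) finite.emptyI, of F] dF by blast
  obtain x1 where x1: "x1 \<in> U" using U(3) by blast
  have "k \<noteq> 0" using k[OF x1] s_nm1[OF x1] unfolding F_def by auto
  have "\<forall>x\<in>U. exp (Ln k - \<Psi>1 x $ 1 $ 2) = s x + 1"
  proof
    fix x assume x: "x \<in> U"
    have "exp (Ln k - \<Psi>1 x $ 1 $ 2) = k / exp (\<Psi>1 x $ 1 $ 2)"
      using \<open>k \<noteq> 0\<close> by (simp add: exp_diff)
    also have "\<dots> = s x + 1" using k[OF x] unfolding F_def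
      by (metis exp_not_eq_zero nonzero_mult_div_cancel_right)
    finally show "exp (Ln k - \<Psi>1 x $ 1 $ 2) = s x + 1" .
  qed
  then show ?thesis by blast
qed

end


lemma no_rational_log:
  fixes p q :: "complex poly"
  assumes q: "q \<noteq> 0"
    and id: "\<And>w. poly q w \<noteq> 0 \<Longrightarrow>
      (poly (pderiv p) w * poly q w - poly p w * poly (pderiv q) w) / (poly q w * poly q w) * (w + 1) = -1"
  shows False
proof -
  define Z where "Z = {w. poly q w = 0}"
  have Zf: "finite Z" unfolding Z_def by (rule poly_roots_finite[OF q])
  define R where "R = 1 + (\<Sum>a\<in>Z. norm (a + 1))"
  have R: "norm (a + 1) < R" if "a \<in> Z" for a
  proof -
    have "norm (a + 1) \<le> (\<Sum>a\<in>Z. norm (a + 1))"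
      using member_le_sum[OF that, of "\<lambda>a. norm (a + 1)"] Zf by simp
    then show ?thesis unfolding R_def by simp
  qed
  have Rpos: "R > 0" unfolding R_def by (smt (verit) sum_nonneg norm_ge_zero)
  define rr where "rr w = poly p w / poly q w" for w
  define rr' where "rr' w = (poly (pderiv p) w * poly q w - poly p w * poly (pderiv q) w) / (poly q w * poly q w)" for w
  define S where "S = {w. poly q w \<noteq> 0}"
  have onpath: "poly q w \<noteq> 0" "w + 1 \<noteq> 0" if "w \<in> path_image (circlepath (-1) R)" for w
  proof -
    have nw: "norm (w + 1) = R" using that Rpos by (simp add: dist_norm norm_minus_commute)
    show "poly q w \<noteq> 0"
    proof
      assume "poly q w = 0"
      then have "w \<in> Z" unfolding Z_def by simp
      then show False using R nw by fastforce
    qed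
    show "w + 1 \<noteq> 0" using nw Rpos by auto
  qed
  have "(rr' has_contour_integral (rr (pathfinish (circlepath (-1) R)) - rr (pathstart (circlepath (-1) R)))) (circlepath (-1) R)"
  proof (rule contour_integral_primitive[where S=S])
    fix w assume "w \<in> S"
    then have "poly q w \<noteq> 0" unfolding S_def by simp
    then show "(rr has_field_derivative rr' w) (at w within S)"
      unfolding rr_def rr'_def by (intro DERIV_divide poly_DERIV has_field_derivative_at_within)
  qed (use onpath in \<open>auto simp: S_def\<close>)
  then have I0: "(rr' has_contour_integral 0) (circlepath (-1) R)" by simp
  have "((\<lambda>u. (-1) / (u - (-1))) has_contour_integral (2 * of_real pi * \<i> * (-1))) (circlepath (-1) R)"
    by (rule Cauchy_integral_circlepath_simple) (use Rpos in auto)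
  then have I1: "(rr' has_contour_integral (2 * of_real pi * \<i> * (-1))) (circlepath (-1) R)"
  proof (rule has_contour_integral_eq)
    fix w assume w: "w \<in> path_image (circlepath (-1) R)"
    have "rr' w * (w + 1) = -1" using id[OF onpath(1)[OF w]] unfolding rr'_def .
    then show "(-1) / (w - (-1)) = rr' w" using onpath(2)[OF w] by (simp add: field_simps)
  qed
  have "0 = 2 * of_real pi * \<i> * (-1 :: complex)"
    using has_contour_integral_unique[OF I0 I1] .
  then show False by simp
qed

lemma alg1:
  assumes a: "(a::complex) \<noteq> 0" "a + 1 \<noteq> 0" and h: "r * (1/(2*a)) = -(1/(2*(a+1)*a))"
  shows "r * (a+1) = -1"
proof -
  have "r = (r * (1/(2*a))) * (2*a)" using a by simp
  also have "\<dots> = -(1/(2*(a+1)*a)) * (2*a)" using h by simp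
  also have "\<dots> = -((2*a)/((a+1)*(2*a)))" by (simp add: mult_ac)
  also have "\<dots> = -(1/(a+1))" using a by simp
  finally show ?thesis using a by (simp add: divide_simps)
qed

lemma alg2:
  assumes "(Q::complex) \<noteq> 0" "Q*Q + N*(1+w) = 0"
  shows "N/(Q*Q)*(w+1) = -1"
proof -
  have QQ: "Q*Q \<noteq> 0" using assms(1) by simp
  have "N*(w+1) = -(Q*Q)" using assms(2) by (metis add.commute add_eq_0_iff2 mult.commute distrib_left mult_1_right)
  then have "N/(Q*Q)*(w+1) = -(Q*Q)/(Q*Q)" by (simp add: divide_simps)
  also have "\<dots> = -1" using QQ by simp
  finally show ?thesis .
qed

context S9
begin

lemma part2: "\<not> (\<exists>p q :: complex poly. \<forall>x\<in>U. poly q (s x) \<noteq> 0 \<and>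
              \<Psi>1 x $ 1 $ 2 = poly p (s x) / poly q (s x))"
proof
  assume "\<exists>p q :: complex poly. \<forall>x\<in>U. poly q (s x) \<noteq> 0 \<and> \<Psi>1 x $ 1 $ 2 = poly p (s x) / poly q (s x)"
  then obtain p q :: "complex poly" where pq: "\<And>x. x \<in> U \<Longrightarrow> poly q (s x) \<noteq> 0"
      "\<And>x. x \<in> U \<Longrightarrow> \<Psi>1 x $ 1 $ 2 = poly p (s x) / poly q (s x)" by blast
  define rr' where "rr' w = (poly (pderiv p) w * poly q w - poly p w * poly (pderiv q) w) / (poly q w * poly q w)" for w
  have key: "rr' (s x) * (s x + 1) = -1" if x: "x \<in> U" for x
  proof -
    have d1: "((\<lambda>w. poly p w / poly q w) has_field_derivative rr' (s x)) (at (s x))"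
      unfolding rr'_def by (intro DERIV_divide poly_DERIV pq(1)[OF x])
    have "((\<lambda>y. poly p (s y) / poly q (s y)) has_field_derivative rr' (s x) * (1 / (2 * s x))) (at x)"
      by (rule DERIV_chain2[OF d1 s_deriv[OF x]])
    then have "((\<lambda>y. \<Psi>1 y $ 1 $ 2) has_field_derivative rr' (s x) * (1 / (2 * s x))) (at x)"
      by (rule has_field_derivative_transform_within_open[OF _ U(1) x]) (use pq(2) in simp)
    then have e: "rr' (s x) * (1 / (2 * s x)) = -(A2 (s x) $ 1 $ 2)"
      using Psi_deriv[OF x] DERIV_unique by blast
    have "A2 (s x) $ 1 $ 2 = 1 / (2 * (s x + 1) * s x)" by (simp add: A2_def)
    with e have "rr' (s x) * (1 / (2 * s x)) = - (1 / (2 * (s x + 1) * s x))" by simp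
    then show ?thesis by (rule alg1[OF s_nz[OF x] s_nm1[OF x]])
  qed
  define P where "P = q * q + (pderiv p * q - p * pderiv q) * [:1, 1:]"
  have Proot: "poly P (s x) = 0" if x: "x \<in> U" for x
  proof -
    have qn: "poly q (s x) \<noteq> 0" by (rule pq(1)[OF x])
    have "poly P (s x) = poly q (s x) * poly q (s x) + (rr' (s x) * (poly q (s x) * poly q (s x))) * (1 + s x)"
      using qn unfolding P_def rr'_def by (simp add: field_simps)
    also have "\<dots> = poly q (s x) * poly q (s x) * (1 + rr' (s x) * (s x + 1))" by (simp add: algebra_simps)
    also have "\<dots> = 0" using key[OF x] by simp
    finally show ?thesis .
  qed
  have "P = 0"
  proof (rule ccontr)
    assume "P \<noteq> 0"
    then have "finite {w. poly P w = 0}" by (rule poly_roots_finite)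
    moreover have "s ` U \<subseteq> {w. poly P w = 0}" using Proot by auto
    ultimately have "finite (s ` U)" by (rule finite_subset[rotated])
    moreover have "inj_on s U"
    proof (rule inj_onI)
      fix x y assume "x \<in> U" "y \<in> U" "s x = s y"
      then show "x = y" using sqrt_branch(2) by metis
    qed
    ultimately have "finite U" using finite_imageD by blast
    then show False using finite_imp_not_open U(1) U(3) by blast
  qed
  obtain x1 where x1: "x1 \<in> U" using U(3) by blast
  have q0: "q \<noteq> 0" using pq(1)[OF x1] by auto
  show False
  proof (rule no_rational_log[OF q0])
    fix w assume qw: "poly q w \<noteq> 0"
    have "poly P w = 0" using \<open>P = 0\<close> by simp
    then have "poly q w * poly q w + (poly (pderiv p) w * poly q w - poly p w * poly (pderiv q) w) * (1 + w) = 0"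
      unfolding P_def by (simp add: algebra_simps)
    then show "(poly (pderiv p) w * poly q w - poly p w * poly (pderiv q) w) / (poly q w * poly q w) * (w + 1) = -1"
      by (rule alg2[OF qw])
  qed
qed

end


theorem mainTheorem9:
  fixes U :: "complex set"
    and s :: "complex \<Rightarrow> complex"
    and \<Phi> :: "complex \<Rightarrow> complex \<Rightarrow> complex^2^2"
    and \<Psi>1 :: "complex \<Rightarrow> complex^2^2"
  assumes U: "open U" "connected U" "U \<noteq> {}" "0 \<notin> U" "1 \<notin> U"
    and sqrt_branch: "s holomorphic_on U" "\<And>x. x \<in> U \<Longrightarrow> (s x)^2 = x"
    and ode_z: "\<And>z x i j. (z, x) \<in> dom_zx U \<Longrightarrow>
        ((\<lambda>w. \<Phi> w x $ i $ j) has_field_derivative ((fuchs_coeff (s x) x z ** \<Phi> z x) $ i $ j)) (at z)"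
    and fundamental: "\<And>z x. (z, x) \<in> dom_zx U \<Longrightarrow> det (\<Phi> z x) \<noteq> 0"
    and pde_x: "\<And>z x i j. (z, x) \<in> dom_zx U \<Longrightarrow>
        ((\<lambda>y. \<Phi> z y $ i $ j) has_field_derivative
           ((cscale (- 1 / (z - x)) (A2 (s x)) ** \<Phi> z x) $ i $ j)) (at x)"
    and expansion: "\<And>x. x \<in> U \<Longrightarrow> \<exists>E :: complex \<Rightarrow> complex^2^2.
        (\<forall>z. (z, x) \<in> dom_zx U \<longrightarrow>
            \<Phi> z x = (mat 1 + cscale (1 / z) (\<Psi>1 x) + E z) ** zpow_negAinf z ** zpow_negRinf z)
        \<and> (\<exists>C r. \<forall>z. (z, x) \<in> dom_zx U \<and> r \<le> norm z \<longrightarrow> norm (E z) \<le> C / (norm z)^2)"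
  shows "(\<exists>c. \<forall>x\<in>U. exp (c - \<Psi>1 x $ 1 $ 2) = s x + 1)
       \<and> \<not> (\<exists>p q :: complex poly. \<forall>x\<in>U. poly q (s x) \<noteq> 0 \<and>
              \<Psi>1 x $ 1 $ 2 = poly p (s x) / poly q (s x))"
  proof -
  interpret S9 U s \<Phi> \<Psi>1
    by (rule S9.intro[OF U sqrt_branch pde_x expansion])
  show ?thesis using part1 part2 by blast
qed

end
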